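(* Let $d\geq 2$ be even, and let $Q$ be a real hyperbolic polynomial of degree $d$ with positive leading coefficient and nonzero constant term which defines the moduli order admitting equalities $r_{PN}^0$ or $r_{NP}^0$. Then exactly one of the following holds: (i) $Q$ is even, i.e. $Q=A\prod_{j=1}^{d/2}(x^2-a_j^2)$ with $A>0$ and $a_j\in\mathbb{R}\setminus\{0\}$ not necessarily distinct. In this case the coefficients of $Q$ have signs $(+,0,-,0,+,0,-,0,\dots)$, read from the leading coefficient down to the constant term. (ii) All coefficients of $Q$ are nonzero, and the multiset of roots of $Q$ cannot be partitioned into $d/2$ pairs of the form $\{a_j,-a_j\}$. In this case $Q$ defines the sign pattern $\Sigma_+$ if it defines $r_{PN}^0$, and the sign pattern $\Sigma_-$ if it defines $r_{NP}^0$.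
   Context: A hyperbolic polynomial (HP) is a real univariate polynomial all of whose roots are real. A moduli order admitting equalities (MOAE) of length $d$ is a string of $d$ letters $P$/$N$ separated by $\leq$. A HP $Q$ of degree $d$ with nonzero constant term defines such a string if its $d$ roots, counted with multiplicity, can be listed as $z_1,\dots,z_d$ with $|z_1|\leq\dots\leq|z_d|$, where $z_i>0$ when the $i$-th letter is $P$ and $z_i<0$ when it is $N$. $r_{PN}^0$ is the alternating string $P\leq N\leq P\leq\dots\leq N$ (even length). $r_{NP}^0$ is $N\leq P\leq N\leq\dots\leq P$ (even length). The sign pattern of a polynomial $a_dx^d+\dots+a_0$ with all $a_j\neq0$ is $(\mathrm{sgn}(a_d),\dots,\mathrm{sgn}(a_0))$. $\Sigma_+=(+,+,-,-,+,+,\dots)$ has entry $+$ in position $k$ ($k=0,\dots,d$, the sign of the coefficient of $x^{d-k}$) iff $k\equiv0,1\pmod4$. $\Sigma_-=(+,-,-,+,+,-,-,+,\dots)$ has entry $+$ in position $k$ iff $k\equiv0,3\pmod4$. *)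

theory Defs
  imports "HOL-Computational_Algebra.Polynomial" "HOL-Library.Multiset"
begin

definition root_list :: "real poly \<Rightarrow> real list \<Rightarrow> bool" where
  "root_list Q zs \<longleftrightarrow> length zs = degree Q \<and>
     Q = smult (lead_coeff Q) (\<Prod>z\<leftarrow>zs. [:-z, 1:])"

definition hyperbolic :: "real poly \<Rightarrow> bool" where
  "hyperbolic Q \<longleftrightarrow> (\<exists>zs. root_list Q zs)"

text \<open>A moduli order admitting equalities of length d is encoded as a bool list:
  True = letter P, False = letter N.\<close>
definition defines_moae :: "real poly \<Rightarrow> bool list \<Rightarrow> bool" where
  "defines_moae Q w \<longleftrightarrow> degree Q = length w \<and> coeff Q 0 \<noteq> 0 \<and>
     (\<exists>zs. root_list Q zs \<and> sorted (map abs zs) \<and>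
        (\<forall>i<length w. (w ! i \<longrightarrow> zs ! i > 0) \<and> (\<not> w ! i \<longrightarrow> zs ! i < 0)))"

definition r_PN0 :: "nat \<Rightarrow> bool list" where
  "r_PN0 d = map (\<lambda>i. even i) [0..<d]"

definition r_NP0 :: "nat \<Rightarrow> bool list" where
  "r_NP0 d = map (\<lambda>i. odd i) [0..<d]"

text \<open>Sign patterns as lists of +1/-1 of length d+1; position k is the sign of the
  coefficient of x^(d-k).\<close>
definition Sigma_plus :: "nat \<Rightarrow> real list" where
  "Sigma_plus d = map (\<lambda>k. if k mod 4 = 0 \<or> k mod 4 = 1 then 1 else -1) [0..<Suc d]"

definition Sigma_minus :: "nat \<Rightarrow> real list" where
  "Sigma_minus d = map (\<lambda>k. if k mod 4 = 0 \<or> k mod 4 = 3 then 1 else -1) [0..<Suc d]"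

definition defines_sign_pattern :: "real poly \<Rightarrow> real list \<Rightarrow> bool" where
  "defines_sign_pattern Q \<sigma> \<longleftrightarrow>
     (\<forall>k\<le>degree Q. coeff Q (degree Q - k) \<noteq> 0) \<and>
     map (\<lambda>k. sgn (coeff Q (degree Q - k))) [0..<Suc (degree Q)] = \<sigma>"

definition pairable :: "real multiset \<Rightarrow> bool" where
  "pairable M \<longleftrightarrow> (\<exists>as. M = mset as + mset (map uminus as))"

end

theory Submission
  imports Defs
begin

definition sg :: "nat \<Rightarrow> real" where
  "sg k = (if k mod 4 = 0 \<or> k mod 4 = 1 then 1 else -1)"

definition sh :: "(nat \<Rightarrow> real) \<Rightarrow> nat \<Rightarrow> real" where
  "sh u k = (case k of 0 \<Rightarrow> 0 | Suc i \<Rightarrow> u i)"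

lemma sg_pm: "sg k = 1 \<or> sg k = -1" by (simp add: sg_def)
lemma sg_SS: "sg (Suc (Suc k)) = - sg k"
  unfolding sg_def by (auto; presburger)
lemma sg_S: "sg (Suc k) = (if even k then sg k else - sg k)"
  unfolding sg_def by (auto; presburger)

lemma coeff_mult3_0: "coeff (p * [:x,y,z:]) 0 = x * coeff p 0"
  by simp
lemma coeff_mult3_1: "coeff (p * [:x,y,z:]) (Suc 0) = x * coeff p 1 + y * coeff p 0"
  by simp
lemma coeff_mult3_SS: "coeff (p * [:x,y,z:]) (Suc (Suc i)) = x * coeff p (Suc (Suc i)) + y * coeff p (Suc i) + z * coeff p i"
  by (simp add: algebra_simps)

lemma step_u:
  fixes u v :: "nat \<Rightarrow> real"
  assumes u0: "\<forall>k. 0 \<le> u k" and u1: "\<forall>k\<le>N. even k \<longrightarrow> 0 < u k" and u2: "\<forall>k>N. u k = 0"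
    and u3: "\<forall>j. even j \<longrightarrow> u (Suc j) \<le> M * u j"
    and N: "even N" and ab: "0 < a" "a \<le> b" "M \<le> a"
    and v: "\<forall>k. v k = u k + (if odd k then b - a else a - b) * sh u k + a*b * sh (sh u) k"
  shows "(\<forall>k. 0 \<le> v k) \<and> (\<forall>k\<le>N+2. even k \<longrightarrow> 0 < v k) \<and> (\<forall>k>N+2. v k = 0)
     \<and> (\<forall>j. even j \<longrightarrow> v (Suc j) \<le> b * v j)
     \<and> ((a < b \<or> (0 < N \<and> (\<forall>k\<le>N. odd k \<longrightarrow> 0 < u k))) \<longrightarrow> (\<forall>k\<le>N+2. odd k \<longrightarrow> 0 < v k))"
proof -
  have v0: "v 0 = u 0" using v by (simp add: sh_def)
  have v1: "v (Suc 0) = u 1 + (b - a) * u 0" using v[rule_format, of 1] by (simp add: sh_def)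
  have vS: "v (Suc (Suc i)) = u (Suc (Suc i)) + (if odd i then b - a else a - b) * u (Suc i) + a*b * u i" for i
    using v[rule_format, of "Suc (Suc i)"] by (simp add: sh_def)
  have ua: "u (Suc j) \<le> a * u j" if "even j" for j
  proof -
    have "M * u j \<le> a * u j" using ab u0 by (simp add: mult_right_mono)
    thus ?thesis using u3 that by fastforce
  qed
  have evlow: "v (Suc (Suc i)) \<ge> u (Suc (Suc i)) + a*a*u i" if "even i" for i
  proof -
    have h: "(b-a)*u (Suc i) \<le> (b-a)*(a*u i)" using ua[OF that] ab by (simp add: mult_left_mono)
    have e: "(b-a)*(a*u i) = a*b*u i - a*a*u i" by (simp add: algebra_simps)
    show ?thesis using vS[of i] that h e by (simp add: algebra_simps)
  qed
  have P1: "\<forall>k. 0 \<le> v k"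
  proof
    fix k show "0 \<le> v k"
    proof (cases k)
      case 0 thus ?thesis using v0 u0 by simp
    next
      case (Suc k') show ?thesis
      proof (cases k')
        case 0 thus ?thesis using Suc v1 u0 ab by simp
      next
        case (Suc i)
        show ?thesis
        proof (cases "even i")
          case True
          have "0 \<le> a*a*u i" "0 \<le> u (Suc (Suc i))" using u0 by simp_all
          moreover have "v k = v (Suc (Suc i))" using \<open>k = Suc k'\<close> Suc by simp
          ultimately show ?thesis using evlow[OF True] by linarith
        next
          case False
          have "0 \<le> (b-a) * u (Suc i)" "0 \<le> a*b*u i" using u0 ab by simp_all
          thus ?thesis using vS[of i] False u0 \<open>k = Suc k'\<close> Suc by simp
        qed
      qed
    qed
  qed
  have P2: "\<forall>k\<le>N+2. even k \<longrightarrow> 0 < v k"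
  proof (intro allI impI)
    fix k assume k: "k \<le> N+2" "even k"
    show "0 < v k"
    proof (cases k)
      case 0 thus ?thesis using v0 u1 by simp
    next
      case (Suc k') then obtain i where i: "k = Suc (Suc i)" using k by (cases k') auto
      have ei: "even i" "i \<le> N" using k i by auto
      have "0 < a*a*u i" "0 \<le> u (Suc (Suc i))" using u1 ei ab u0 by simp_all
      thus ?thesis using evlow[OF ei(1)] unfolding i by linarith
    qed
  qed
  have P3: "\<forall>k>N+2. v k = 0"
  proof (intro allI impI)
    fix k assume k: "k > N+2"
    then obtain i where i: "k = Suc (Suc i)" by (cases k; cases "k - 1") auto
    show "v k = 0" using vS[of i] u2 k i by simp
  qed
  have P4: "\<forall>j. even j \<longrightarrow> v (Suc j) \<le> b * v j"
  proof (intro allI impI)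
    fix j :: nat assume j: "even j"
    show "v (Suc j) \<le> b * v j"
    proof (cases j)
      case 0
      have "u 1 \<le> a * u 0" using ua[of 0] by simp
      hence "u 1 + (b-a)*u 0 \<le> b * u 0" by (simp add: algebra_simps)
      thus ?thesis using 0 v0 v1 by simp
    next
      case (Suc j') then obtain i where i: "j = Suc (Suc i)" using j by (cases j') auto
      have ei: "even i" using i j by simp
      have A: "v (Suc j) = u (Suc (Suc (Suc i))) + (b - a) * u (Suc (Suc i)) + a*b*u (Suc i)"
        using vS[of "Suc i"] i ei by simp
      have B: "v j = u (Suc (Suc i)) + (a - b) * u (Suc i) + a*b*u i" using vS[of i] i ei by simp
      have C: "b * v j - v (Suc j) = (a * u (Suc (Suc i)) - u (Suc (Suc (Suc i)))) + b*b*(a * u i - u (Suc i))"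
        unfolding A B by (simp add: algebra_simps)
      have D1: "0 \<le> a * u (Suc (Suc i)) - u (Suc (Suc (Suc i)))" using ua[of "Suc (Suc i)"] ei by simp
      have D2: "0 \<le> b*b*(a * u i - u (Suc i))" using ua[of i] ei by simp
      show ?thesis using C D1 D2 by linarith
    qed
  qed
  have P5: "(a < b \<or> (0 < N \<and> (\<forall>k\<le>N. odd k \<longrightarrow> 0 < u k))) \<longrightarrow> (\<forall>k\<le>N+2. odd k \<longrightarrow> 0 < v k)"
  proof (intro impI allI)
    fix k assume H: "a < b \<or> (0 < N \<and> (\<forall>k\<le>N. odd k \<longrightarrow> 0 < u k))" and k: "k \<le> N+2" "odd k"
    show "0 < v k"
    proof (cases k)
      case 0 thus ?thesis using k by simp
    next
      case (Suc k')
      show ?thesis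
      proof (cases k')
        case 0
        have "0 < u 0" using u1 by simp
        then have "a < b \<Longrightarrow> 0 < (b-a)*u 0" by simp
        moreover have "0 < N \<and> (\<forall>k\<le>N. odd k \<longrightarrow> 0 < u k) \<Longrightarrow> 0 < u 1" by simp
        moreover have "0 \<le> (b-a)*u 0" "0 \<le> u 1" using u0 ab by simp_all
        ultimately show ?thesis using H v1 Suc 0 by fastforce
      next
        case (Suc i)
        have k2: "k = Suc (Suc i)" using Suc \<open>k = Suc k'\<close> by simp
        have oi: "odd i" using k k2 by simp
        have V: "v k = u (Suc (Suc i)) + (b - a) * u (Suc i) + a*b * u i" using vS[of i] oi k2 by simp
        have nn: "0 \<le> u (Suc (Suc i))" "0 \<le> (b - a) * u (Suc i)" "0 \<le> a*b*u i" using u0 ab by simp_all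
        show ?thesis
        proof (cases "a < b")
          case True
          have "Suc i \<le> N" using k k2 N oi by presburger
          hence "0 < u (Suc i)" using u1 oi by simp
          hence "0 < (b - a) * u (Suc i)" using True by simp
          thus ?thesis using V nn by linarith
        next
          case False
          hence "\<forall>k\<le>N. odd k \<longrightarrow> 0 < u k" using H by simp
          moreover have "i \<le> N" using k k2 by simp
          ultimately have "0 < u i" using oi by simp
          hence "0 < a*b*u i" using ab by simp
          thus ?thesis using V nn by linarith
        qed
      qed
    qed
  qed
  show ?thesis by (rule conjI[OF P1 conjI[OF P2 conjI[OF P3 conjI[OF P4 P5]]]])
qed

lemma link:
  fixes G G' :: "real poly" and e :: real
  assumes e: "e = 1 \<or> e = -1" and G': "G' = G * [:1, \<beta>, \<gamma>:]"
  defines "u \<equiv> \<lambda>k. sg k * e^k * coeff G k"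
  shows "\<forall>k. sg k * e^k * coeff G' k = u k + (if odd k then e*\<beta> else -(e*\<beta>)) * sh u k + (-\<gamma>) * sh (sh u) k"
proof
  fix k
  have ee: "e * e = 1" using e by auto
  show "sg k * e^k * coeff G' k = u k + (if odd k then e*\<beta> else -(e*\<beta>)) * sh u k + (-\<gamma>) * sh (sh u) k"
  proof (cases k)
    case 0 thus ?thesis by (simp add: G' coeff_mult3_0 u_def sh_def)
  next
    case (Suc k')
    show ?thesis
    proof (cases k')
      case 0
      have "sg 1 = 1" "sg 0 = 1" by (simp_all add: sg_def)
      thus ?thesis using Suc 0 ee by (simp add: G' coeff_mult3_1 u_def sh_def algebra_simps)
    next
      case (Suc i)
      have k: "k = Suc (Suc i)" using Suc \<open>k = Suc k'\<close> by simp
      have ee2: "\<And>X. e * (e * X) = X" using ee by (metis mult.assoc mult_1)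
      have p2: "e ^ Suc (Suc i) = e^i" using ee2 by (simp only: power_Suc)
      show ?thesis
      proof (cases "even i")
        case True
        have s1: "sg (Suc i) = sg i" using sg_S[of i] True by simp
        show ?thesis
          unfolding k G' coeff_mult3_SS u_def sh_def
          using sg_SS[of i] s1 p2 True by (simp add: algebra_simps ee2)
      next
        case False
        have s1: "sg (Suc i) = - sg i" using sg_S[of i] False by simp
        show ?thesis
          unfolding k G' coeff_mult3_SS u_def sh_def
          using sg_SS[of i] s1 p2 False by (simp add: algebra_simps ee2)
      qed
    qed
  qed
qed

lemma odd_zero_prod:
  "odd k \<Longrightarrow> coeff (\<Prod>a\<leftarrow>as. [:f a, 0, g a:]) k = (0::real)"
proof (induction as arbitrary: k)
  case Nil thus ?case by (cases k) auto
next
  case (Cons a as)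
  have eq: "(\<Prod>a\<leftarrow>a#as. [:f a, 0, g a:]) = (\<Prod>a\<leftarrow>as. [:f a, 0, g a:]) * [:f a, 0, g a:]"
    by (simp add: mult.commute)
  show ?case
  proof (cases k)
    case 0 thus ?thesis using Cons by simp
  next
    case (Suc k')
    show ?thesis
    proof (cases k')
      case 0 thus ?thesis using Cons Suc by (simp add: eq coeff_mult3_1)
    next
      case (Suc i)
      thus ?thesis using Cons \<open>k = Suc k'\<close> by (simp add: eq coeff_mult3_SS)
    qed
  qed
qed

lemma prod_list_upt: "prod_list (map f [0..<n]) = (\<Prod>j<n. f j)"
  by (induction n) (simp_all add: mult.commute)

lemma prod_pairs: "(\<Prod>i<2*(n::nat). f i) = (\<Prod>j<n. f (2*j) * (f (2*j+1) :: real poly))"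
  by (induction n) (simp_all add: mult.assoc)

lemma prod_list_nth: "(\<Prod>z\<leftarrow>zs. f z) = (\<Prod>i<length zs. f (zs ! i) :: real poly)"
proof -
  have m: "map f zs = map (\<lambda>i. f (zs ! i)) [0..<length zs]"
    by (rule nth_equalityI) auto
  have "(\<Prod>z\<leftarrow>zs. f z) = prod_list (map (\<lambda>i. f (zs ! i)) [0..<length zs])"
    by (simp only: m)
  also have "\<dots> = (\<Prod>i<length zs. f (zs ! i))" by (rule prod_list_upt)
  finally show ?thesis .
qed

lemma pm: "prod_mset (image_mset f (mset xs)) = prod_list (map f xs)"
  by (subst mset_map[symmetric]) (rule prod_mset_prod_list)

lemma pair_prod: "(\<Prod>z\<leftarrow>zs. f z) = (\<Prod>a\<leftarrow>as. f a * f (-a) :: real poly)"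
  if "mset zs = mset as + mset (map uminus as)"
proof -
  have "(\<Prod>z\<leftarrow>zs. f z) = prod_mset (image_mset f (mset zs))"
    by (simp only: pm)
  also have "\<dots> = prod_mset (image_mset f (mset as)) * prod_mset (image_mset f (mset (map uminus as)))"
    using that by simp
  also have "\<dots> = (\<Prod>a\<leftarrow>as. f a) * (\<Prod>a\<leftarrow>map uminus as. f a)"
    by (simp only: pm)
  also have "\<dots> = (\<Prod>a\<leftarrow>as. f a * f (-a))"
    by (induction as) (simp_all add: mult_ac)
  finally show ?thesis .
qed

lemma even_sign:
  "(\<forall>a\<in>set as. a \<noteq> (0::real)) \<Longrightarrow>
   (\<forall>k. 0 \<le> sg k * coeff (\<Prod>a\<leftarrow>as. [:1,0,-(a^2):]) k) \<and>
   (\<forall>k\<le>2*length as. even k \<longrightarrow> 0 < sg k * coeff (\<Prod>a\<leftarrow>as. [:1,0,-(a^2):]) k) \<and>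
   (\<forall>k>2*length as. sg k * coeff (\<Prod>a\<leftarrow>as. [:1,0,-(a^2):]) k = 0)"
proof (induction as)
  case Nil
  have "sg 0 = 1" by (simp add: sg_def)
  thus ?case by (auto simp: coeff_1)
next
  case (Cons a as)
  define G where "G = (\<Prod>a\<leftarrow>as. [:1,0,-(a^2):])"
  define u where "u = (\<lambda>k. sg k * coeff G k)"
  have IH: "(\<forall>k. 0 \<le> u k) \<and> (\<forall>k\<le>2*length as. even k \<longrightarrow> 0 < u k) \<and> (\<forall>k>2*length as. u k = 0)"
    using Cons unfolding u_def G_def by simp
  have G': "(\<Prod>a\<leftarrow>a#as. [:1,0,-(a^2):]) = G * [:1,0,-(a^2):]"
    by (simp add: G_def mult.commute)
  have L: "\<forall>k. sg k * 1^k * coeff (G * [:1,0,-(a^2):]) k = (\<lambda>k. sg k * 1^k * coeff G k) k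
      + (if odd k then 1*0 else -(1*0)) * sh (\<lambda>k. sg k * 1^k * coeff G k) k
      + (- (-(a^2))) * sh (sh (\<lambda>k. sg k * 1^k * coeff G k)) k"
    by (rule link) simp_all
  have rel: "\<forall>k. sg k * coeff (G * [:1,0,-(a^2):]) k = u k + (if odd k then \<bar>a\<bar> - \<bar>a\<bar> else \<bar>a\<bar> - \<bar>a\<bar>) * sh u k + \<bar>a\<bar> * \<bar>a\<bar> * sh (sh u) k"
    using L unfolding u_def by (simp add: power2_eq_square[symmetric])
  have oz: "\<forall>j. even j \<longrightarrow> u (Suc j) \<le> 0 * u j"
  proof (intro allI impI)
    fix j :: nat assume "even j"
    hence "coeff G (Suc j) = 0" unfolding G_def
      using odd_zero_prod[of "Suc j" "\<lambda>_. 1" "\<lambda>a. -(a^2)" as] by simp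
    thus "u (Suc j) \<le> 0 * u j" by (simp add: u_def)
  qed
  have an: "0 < \<bar>a\<bar>" using Cons.prems by simp
  have S: "(\<forall>k. 0 \<le> sg k * coeff (G * [:1,0,-(a^2):]) k) \<and> (\<forall>k\<le>2*length as+2. even k \<longrightarrow> 0 < sg k * coeff (G * [:1,0,-(a^2):]) k) \<and> (\<forall>k>2*length as+2. sg k * coeff (G * [:1,0,-(a^2):]) k = 0)"
  proof -
    have ev: "even (2*length as)" by simp
    have z: "0 \<le> \<bar>a\<bar>" by simp
    note ST = step_u[OF IH[THEN conjunct1] IH[THEN conjunct2, THEN conjunct1] IH[THEN conjunct2, THEN conjunct2] oz ev an order_refl z rel]
    show ?thesis
      by (intro conjI) (rule ST[THEN conjunct1], rule ST[THEN conjunct2, THEN conjunct1], rule ST[THEN conjunct2, THEN conjunct2, THEN conjunct1])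
  qed
  show ?case unfolding G' using S by simp
qed

lemma part2:
  fixes Q :: "real poly"
  assumes A: "A > 0" and nz: "\<forall>a\<in>set as. a \<noteq> 0" and Q: "Q = smult A (\<Prod>a\<leftarrow>as. [:-(a^2),0,1:])"
    and dQ: "degree Q = d" and len: "length as = d div 2" and ev: "even d"
  shows "\<forall>k\<le>d. sgn (coeff Q (d-k)) = (if odd k then 0 else if k mod 4 = 0 then 1 else -1)"
proof (intro allI impI)
  fix k assume k: "k \<le> d"
  define G where "G = (\<Prod>a\<leftarrow>as. [:1,0,-(a^2):])"
  have r: "reflect_poly [:-(a^2),0,1:] = [:1,0,-(a^2):]" if "a \<in> set as" for a
    using nz that by (simp add: reflect_poly_def)
  have R: "reflect_poly Q = smult A G"
  proof -
    have "map (reflect_poly \<circ> (\<lambda>a. [:-(a^2),0,1:])) as = map (\<lambda>a. [:1,0,-(a^2):]) as"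
      by (rule map_cong) (simp_all add: r)
    thus ?thesis unfolding Q G_def reflect_poly_smult reflect_poly_prod_list map_map by (simp only:)
  qed
  have c: "coeff Q (d-k) = A * coeff G k"
    using coeff_reflect_poly[of Q k] R k dQ by simp
  have d2: "d = 2 * length as" using len ev by simp
  have ES: "(\<forall>k\<le>2*length as. even k \<longrightarrow> 0 < sg k * coeff G k)"
    using even_sign[OF nz] unfolding G_def by blast
  show "sgn (coeff Q (d-k)) = (if odd k then 0 else if k mod 4 = 0 then 1 else -1)"
  proof (cases "odd k")
    case True
    have "coeff G k = 0" unfolding G_def
      using odd_zero_prod[of k "\<lambda>_. 1" "\<lambda>a. -(a^2)" as] True by simp
    thus ?thesis using c True by simp
  next
    case False
    have p: "0 < sg k * coeff G k" using ES k d2 False by simp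
    show ?thesis
    proof (cases "k mod 4 = 0")
      case True
      hence "sg k = 1" by (simp add: sg_def)
      thus ?thesis using p c A True False by (simp add: sgn_mult)
    next
      case F2: False
      have "k mod 4 = 2" using False F2 by presburger
      hence "sg k = -1" by (simp add: sg_def)
      hence "coeff G k < 0" using p by simp
      thus ?thesis using c A F2 False by (simp add: sgn_mult)
    qed
  qed
qed


lemma moae_core:
  fixes Q :: "real poly" and zs :: "real list" and e L :: real and n :: nat
  assumes e: "e = 1 \<or> e = -1"
    and len: "length zs = 2*n" and Qf: "Q = smult L (\<Prod>z\<leftarrow>zs. [:-z,1:])" and L: "L > 0"
    and dQ: "degree Q = 2*n"
    and srt: "sorted (map abs zs)"
    and sgz: "\<forall>j<n. e * zs!(2*j) > 0 \<and> e * zs!(2*j+1) < 0"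
  shows "((\<exists>A as. A > 0 \<and> length as = n \<and> (\<forall>a\<in>set as. a \<noteq> 0) \<and> Q = smult A (\<Prod>a\<leftarrow>as. [:-(a^2), 0, 1:]))
            \<or> (\<forall>k \<le> 2*n. coeff Q k \<noteq> 0))
     \<and> ((\<forall>k \<le> 2*n. coeff Q k \<noteq> 0) \<longrightarrow> (\<forall>k \<le> 2*n. sgn (coeff Q (2*n - k)) = sg k * e^k))"
proof -
  define z0 where "z0 j = zs!(2*j)" for j
  define z1 where "z1 j = zs!(2*j+1)" for j
  define \<beta> where "\<beta> j = -(z0 j + z1 j)" for j
  define \<gamma> where "\<gamma> j = z0 j * z1 j" for j
  define a where "a j = \<bar>z0 j\<bar>" for j
  define b where "b j = \<bar>z1 j\<bar>" for j
  have ee: "e*e = 1" using e by auto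
  have z0a: "z0 j = e * a j" if "j<n" for j
    using e sgz that unfolding a_def z0_def by auto
  have z1b: "z1 j = -(e * b j)" if "j<n" for j
    using e sgz that unfolding b_def z1_def by auto
  have apos: "0 < a j" if "j<n" for j
    using e sgz that unfolding a_def z0_def by auto
  have bpos: "0 < b j" if "j<n" for j
    using e sgz that unfolding b_def z1_def by auto
  have ab: "a j \<le> b j" if "j<n" for j
  proof -
    have "(map abs zs)!(2*j) \<le> (map abs zs)!(2*j+1)"
      using sorted_nth_mono[OF srt, of "2*j" "2*j+1"] len that by simp
    thus ?thesis using len that by (simp add: a_def b_def z0_def z1_def)
  qed
  have ba: "b j \<le> a (Suc j)" if "Suc j<n" for j
  proof -
    have "(map abs zs)!(2*j+1) \<le> (map abs zs)!(2*(Suc j))"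
      using sorted_nth_mono[OF srt, of "2*j+1" "2*Suc j"] len that by simp
    thus ?thesis using len that by (simp add: a_def b_def z0_def z1_def)
  qed
  have ee2: "\<And>X. e * (e * X) = X" using ee by (metis mult.assoc mult_1)
  have eb: "e * \<beta> j = b j - a j" if "j<n" for j
    unfolding \<beta>_def z0a[OF that] z1b[OF that] by (simp add: algebra_simps ee2)
  have gab: "-\<gamma> j = a j * b j" if "j<n" for j
    unfolding \<gamma>_def z0a[OF that] z1b[OF that] by (simp add: algebra_simps ee2)
  have gnz: "\<gamma> j \<noteq> 0" if "j<n" for j
    using gab[OF that] apos[OF that] bpos[OF that] by auto
  have Hj: "[:-zs!(2*j),1:] * [:-zs!(2*j+1),1:] = [:\<gamma> j, \<beta> j, 1:]" for j
    by (simp add: \<gamma>_def \<beta>_def z0_def z1_def algebra_simps)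
  have Qp: "Q = smult L (\<Prod>j<n. [:\<gamma> j, \<beta> j, 1:])"
  proof -
    have "(\<Prod>z\<leftarrow>zs. [:-z,1:]) = (\<Prod>i<2*n. [:-zs!i,1:])"
      using prod_list_nth[of "\<lambda>z. [:-z,1:]" zs] len by simp
    also have "\<dots> = (\<Prod>j<n. [:-zs!(2*j),1:] * [:-zs!(2*j+1),1:])" by (rule prod_pairs)
    also have "\<dots> = (\<Prod>j<n. [:\<gamma> j, \<beta> j, 1:])" by (simp only: Hj)
    finally show ?thesis using Qf by simp
  qed
  define G where "G m = (\<Prod>j<m. [:1, \<beta> j, \<gamma> j:])" for m
  have Rp: "reflect_poly Q = smult L (G n)"
  proof -
    have "reflect_poly (\<Prod>j<n. [:\<gamma> j, \<beta> j, 1:]) = (\<Prod>j<n. reflect_poly [:\<gamma> j, \<beta> j, 1:])"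
      by (rule reflect_poly_prod)
    also have "\<dots> = G n" unfolding G_def
      by (rule prod.cong) (simp_all add: reflect_poly_def gnz)
    finally show ?thesis using Qp by (simp add: reflect_poly_smult)
  qed
  have cQ: "coeff Q (2*n - k) = L * coeff (G n) k" if "k \<le> 2*n" for k
    using coeff_reflect_poly[of Q k] Rp that dQ by simp
  define U where "U m k = sg k * e^k * coeff (G m) k" for m k
  have ind: "m \<le> n \<Longrightarrow> (\<forall>k. 0 \<le> U m k) \<and> (\<forall>k\<le>2*m. even k \<longrightarrow> 0 < U m k) \<and> (\<forall>k>2*m. U m k = 0)
     \<and> (\<forall>j. even j \<longrightarrow> U m (Suc j) \<le> (if m = 0 then 0 else b (m-1)) * U m j)
     \<and> ((\<exists>j<m. a j < b j) \<longrightarrow> (\<forall>k\<le>2*m. odd k \<longrightarrow> 0 < U m k))" for m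
  proof (induction m)
    case 0
    have U0: "U 0 k = (if k = 0 then 1 else 0)" for k by (simp add: U_def G_def sg_def)
    show ?case by (simp add: U0)
  next
    case (Suc m)
    hence mn: "m < n" by simp
    note IH = Suc.IH[OF less_imp_le[OF mn]]
    have Ufun: "U m = (\<lambda>k. sg k * e^k * coeff (G m) k)" by (rule ext) (simp add: U_def)
    have GS: "G (Suc m) = G m * [:1, \<beta> m, \<gamma> m:]" by (simp add: G_def)
    have lk: "\<forall>k. sg k * e^k * coeff (G (Suc m)) k = (\<lambda>k. sg k * e^k * coeff (G m) k) k
        + (if odd k then e * \<beta> m else -(e * \<beta> m)) * sh (\<lambda>k. sg k * e^k * coeff (G m) k) k
        + (- \<gamma> m) * sh (sh (\<lambda>k. sg k * e^k * coeff (G m) k)) k"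
      by (rule link[OF e GS])
    have rel: "\<forall>k. U (Suc m) k = U m k + (if odd k then b m - a m else a m - b m) * sh (U m) k
        + a m * b m * sh (sh (U m)) k"
    proof
      fix k
      show "U (Suc m) k = U m k + (if odd k then b m - a m else a m - b m) * sh (U m) k
        + a m * b m * sh (sh (U m)) k"
        using lk[rule_format, of k] eb[OF mn] gab[OF mn] unfolding Ufun by (simp add: U_def)
    qed
    have M: "(if m = 0 then 0 else b (m-1)) \<le> a m"
      using apos[OF mn] ba[of "m-1"] mn by (cases m) auto
    have ev: "even (2*m)" by simp
    note ST = step_u[OF IH[THEN conjunct1] IH[THEN conjunct2, THEN conjunct1]
        IH[THEN conjunct2, THEN conjunct2, THEN conjunct1]
        IH[THEN conjunct2, THEN conjunct2, THEN conjunct2, THEN conjunct1] ev apos[OF mn] ab[OF mn] M rel]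
    have strict: "(\<exists>j<Suc m. a j < b j) \<longrightarrow> (a m < b m \<or> (0 < 2*m \<and> (\<forall>k\<le>2*m. odd k \<longrightarrow> 0 < U m k)))"
    proof
      assume "\<exists>j<Suc m. a j < b j"
      then obtain j where j: "j < Suc m" "a j < b j" by blast
      show "a m < b m \<or> (0 < 2*m \<and> (\<forall>k\<le>2*m. odd k \<longrightarrow> 0 < U m k))"
      proof (cases "j = m")
        case True thus ?thesis using j by simp
      next
        case False
        hence "j < m" using j by simp
        thus ?thesis using IH[THEN conjunct2, THEN conjunct2, THEN conjunct2, THEN conjunct2] j by auto
      qed
    qed
    have e2: "2 * Suc m = 2*m + 2" by simp
    show ?case unfolding e2 using ST strict by auto
  qed
  note fin = ind[OF order_refl]
  have tpm: "sg k * e^k = 1 \<or> sg k * e^k = -1" for k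
  proof -
    have "(-1::real)^k = 1 \<or> (-1::real)^k = -1" by (cases "even k") auto
    thus ?thesis using sg_pm[of k] e by auto
  qed
  show ?thesis
  proof (intro conjI impI)
    show "(\<exists>A as. A > 0 \<and> length as = n \<and> (\<forall>a\<in>set as. a \<noteq> 0) \<and> Q = smult A (\<Prod>a\<leftarrow>as. [:-(a^2), 0, 1:]))
            \<or> (\<forall>k \<le> 2*n. coeff Q k \<noteq> 0)"
    proof (cases "\<exists>j<n. a j < b j")
      case True
      have "\<forall>k\<le>2*n. 0 < U n k"
      proof (intro allI impI)
        fix k assume "k \<le> 2*n"
        thus "0 < U n k" using fin True by (cases "even k") auto
      qed
      have "coeff Q k \<noteq> 0" if k: "k \<le> 2*n" for k
      proof -
        have "0 < U n (2*n - k)" using \<open>\<forall>k\<le>2*n. 0 < U n k\<close> by simp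
        hence "coeff (G n) (2*n - k) \<noteq> 0" by (auto simp: U_def)
        moreover have "coeff Q (2*n - (2*n - k)) = L * coeff (G n) (2*n - k)" by (rule cQ) simp
        ultimately show ?thesis using k L by simp
      qed
      thus ?thesis by blast
    next
      case False
      hence eqab: "a j = b j" if "j<n" for j using ab[OF that] that by force
      have z1z0: "z1 j = - z0 j" if "j<n" for j
        using eqab[OF that] z0a[OF that] z1b[OF that] by simp
      have F: "[:\<gamma> j, \<beta> j, 1:] = [:-((z0 j)^2), 0, 1:]" if "j<n" for j
        using z1z0[OF that] by (simp add: \<gamma>_def \<beta>_def power2_eq_square)
      define as where "as = map z0 [0..<n]"
      have "(\<Prod>a\<leftarrow>as. [:-(a^2), 0, 1:]) = (\<Prod>j<n. [:-((z0 j)^2), 0, 1:])"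
        unfolding as_def map_map by (simp add: prod_list_upt comp_def)
      also have "\<dots> = (\<Prod>j<n. [:\<gamma> j, \<beta> j, 1:])" by (rule prod.cong) (simp_all add: F)
      finally have "Q = smult L (\<Prod>a\<leftarrow>as. [:-(a^2), 0, 1:])" using Qp by simp
      moreover have "length as = n" by (simp add: as_def)
      moreover have "\<forall>a\<in>set as. a \<noteq> 0"
        using apos z0a e unfolding as_def by force
      ultimately show ?thesis using L by blast
    qed
  next
    assume nz: "\<forall>k \<le> 2*n. coeff Q k \<noteq> 0"
    show "\<forall>k \<le> 2*n. sgn (coeff Q (2*n - k)) = sg k * e^k"
    proof (intro allI impI)
      fix k assume k: "k \<le> 2*n"
      have c: "coeff Q (2*n - k) = L * coeff (G n) k" by (rule cQ[OF k])
      have "coeff (G n) k \<noteq> 0" using nz k c by auto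
      moreover have "0 \<le> sg k * e^k * coeff (G n) k" using fin by (simp add: U_def)
      ultimately have pos: "0 < sg k * e^k * coeff (G n) k"
        using tpm[of k] by auto
      show "sgn (coeff Q (2*n - k)) = sg k * e^k"
      proof (cases "sg k * e^k = 1")
        case True
        hence "0 < coeff (G n) k" using pos by simp
        thus ?thesis using True c L by (simp add: sgn_mult)
      next
        case False
        hence m1: "sg k * e^k = -1" using tpm[of k] by simp
        hence "coeff (G n) k < 0" using pos by simp
        thus ?thesis using m1 c L by (simp add: sgn_mult)
      qed
    qed
  qed
qed


lemma Sigma_plus_nth: "k \<le> d \<Longrightarrow> Sigma_plus d ! k = sg k * 1^k"
  by (simp add: Sigma_plus_def sg_def less_Suc_eq_le del: upt_Suc)

lemma Sigma_minus_nth: "k \<le> d \<Longrightarrow> Sigma_minus d ! k = sg k * (-1)^k"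
proof -
  assume k: "k \<le> d"
  have "Sigma_minus d ! k = (if k mod 4 = 0 \<or> k mod 4 = 3 then 1 else -1)"
    using k by (simp add: Sigma_minus_def less_Suc_eq_le del: upt_Suc)
  moreover have "even k \<longleftrightarrow> (k mod 4 = 0 \<or> k mod 4 = 2)" by presburger
  moreover have "k mod 4 = 0 \<or> k mod 4 = 1 \<or> k mod 4 = 2 \<or> k mod 4 = 3" by presburger
  ultimately show ?thesis by (auto simp: sg_def)
qed

lemma sign_pattern:
  assumes "degree Q = d" "\<forall>k\<le>d. coeff Q k \<noteq> 0" "\<forall>k\<le>d. sgn (coeff Q (d-k)) = \<sigma>!k" "length \<sigma> = Suc d"
  shows "defines_sign_pattern Q \<sigma>"
  unfolding defines_sign_pattern_def
proof (intro conjI allI impI)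
  fix k assume "k \<le> degree Q"
  thus "coeff Q (degree Q - k) \<noteq> 0" using assms(1,2) by simp
next
  show "map (\<lambda>k. sgn (coeff Q (degree Q - k))) [0..<Suc (degree Q)] = \<sigma>"
  proof (rule nth_equalityI)
    show "length (map (\<lambda>k. sgn (coeff Q (degree Q - k))) [0..<Suc (degree Q)]) = length \<sigma>"
      using assms(1,4) by simp
  next
    fix i assume "i < length (map (\<lambda>k. sgn (coeff Q (degree Q - k))) [0..<Suc (degree Q)])"
    hence i: "i \<le> d" using assms(1) by simp
    have "map (\<lambda>k. sgn (coeff Q (degree Q - k))) [0..<Suc (degree Q)] ! i = sgn (coeff Q (d - i))"
      using i assms(1) by (simp add: less_Suc_eq_le del: upt_Suc)
    thus "map (\<lambda>k. sgn (coeff Q (degree Q - k))) [0..<Suc (degree Q)] ! i = \<sigma> ! i"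
      using assms(3) i by simp
  qed
qed

lemma r_PN0_nth: "i < d \<Longrightarrow> r_PN0 d ! i = even i" by (simp add: r_PN0_def)
lemma r_NP0_nth: "i < d \<Longrightarrow> r_NP0 d ! i = odd i" by (simp add: r_NP0_def)

lemma pair_odd:
  assumes "root_list Q zs" "pairable (mset zs)"
  shows "coeff Q 1 = 0"
proof -
  obtain as where as: "mset zs = mset as + mset (map uminus as)" using assms(2) unfolding pairable_def by blast
  have Q: "Q = smult (lead_coeff Q) (\<Prod>z\<leftarrow>zs. [:-z,1:])" using assms(1) unfolding root_list_def by blast
  have "(\<Prod>z\<leftarrow>zs. [:-z,1:]) = (\<Prod>a\<leftarrow>as. [:-a,1:] * [:-(-a),1:])"
    by (rule pair_prod[OF as])
  also have "\<dots> = (\<Prod>a\<leftarrow>as. [:-(a^2),0,1:])"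
  proof -
    have "[:-a,1:] * [:-(-a),1:] = [:-(a^2),0,1::real:]" for a :: real
      by (simp add: power2_eq_square)
    thus ?thesis by simp
  qed
  finally have "Q = smult (lead_coeff Q) (\<Prod>a\<leftarrow>as. [:-(a^2),0,1:])" using Q by simp
  moreover have "coeff (\<Prod>a\<leftarrow>as. [:-(a^2),0,1:]) 1 = (0::real)"
    using odd_zero_prod[of 1 "\<lambda>a. -(a^2)" "\<lambda>_. 1" as] by simp
  ultimately show ?thesis by (metis coeff_smult mult_zero_right)
qed

theorem theorem1p10:
  fixes Q :: "real poly" and d :: nat
  assumes "d \<ge> 2" and "even d"
    and "hyperbolic Q" and "degree Q = d" and "lead_coeff Q > 0" and "coeff Q 0 \<noteq> 0"
    and "defines_moae Q (r_PN0 d) \<or> defines_moae Q (r_NP0 d)"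
  shows "((\<exists>A as. A > 0 \<and> length as = d div 2 \<and> (\<forall>a\<in>set as. a \<noteq> 0) \<and>
              Q = smult A (\<Prod>a\<leftarrow>as. [:-(a^2), 0, 1:]))
          \<noteq> ((\<forall>k\<le>d. coeff Q k \<noteq> 0) \<and>
              (\<forall>zs. root_list Q zs \<longrightarrow> \<not> pairable (mset zs))))
       \<and> ((\<exists>A as. A > 0 \<and> length as = d div 2 \<and> (\<forall>a\<in>set as. a \<noteq> 0) \<and>
              Q = smult A (\<Prod>a\<leftarrow>as. [:-(a^2), 0, 1:]))
          \<longrightarrow> (\<forall>k\<le>d. sgn (coeff Q (d - k)) =
                 (if odd k then 0 else if k mod 4 = 0 then 1 else -1)))
       \<and> (((\<forall>k\<le>d. coeff Q k \<noteq> 0) \<and>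
              (\<forall>zs. root_list Q zs \<longrightarrow> \<not> pairable (mset zs)))
          \<longrightarrow> (defines_moae Q (r_PN0 d) \<longrightarrow> defines_sign_pattern Q (Sigma_plus d))
            \<and> (defines_moae Q (r_NP0 d) \<longrightarrow> defines_sign_pattern Q (Sigma_minus d)))"
  proof -
  obtain n where dn: "d = 2*n" using assms(2) by (auto elim: evenE)
  have hdiv: "d div 2 = n" using dn by simp
  have d1: "1 \<le> d" using assms(1) by simp
  have L: "lead_coeff Q > 0" using assms(5) .
  have core: "((\<exists>A as. A > 0 \<and> length as = d div 2 \<and> (\<forall>a\<in>set as. a \<noteq> 0) \<and>
              Q = smult A (\<Prod>a\<leftarrow>as. [:-(a^2), 0, 1:])) \<or> (\<forall>k\<le>d. coeff Q k \<noteq> 0))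
     \<and> ((\<forall>k\<le>d. coeff Q k \<noteq> 0) \<longrightarrow> (\<forall>k\<le>d. sgn (coeff Q (d - k)) = sg k * e^k))"
    if ew: "e = 1 \<and> w = r_PN0 d \<or> e = -1 \<and> w = r_NP0 d" and dm: "defines_moae Q w" for e w
  proof -
    obtain zs where rl: "root_list Q zs" and srt: "sorted (map abs zs)"
      and sgw: "\<forall>i<length w. (w ! i \<longrightarrow> zs ! i > 0) \<and> (\<not> w ! i \<longrightarrow> zs ! i < 0)"
      and lw: "degree Q = length w"
      using dm unfolding defines_moae_def by blast
    have len: "length zs = 2*n" using rl assms(4) dn unfolding root_list_def by simp
    have Qf: "Q = smult (lead_coeff Q) (\<Prod>z\<leftarrow>zs. [:-z,1:])" using rl unfolding root_list_def by blast
    have lw': "length w = d" using lw assms(4) by simp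
    have e: "e = 1 \<or> e = -1" using ew by blast
    have sgz: "\<forall>j<n. e * zs!(2*j) > 0 \<and> e * zs!(2*j+1) < 0"
    proof (intro allI impI)
      fix j assume j: "j < n"
      have j1: "2*j < d" "2*j+1 < d" using j dn by simp_all
      show "e * zs!(2*j) > 0 \<and> e * zs!(2*j+1) < 0"
      proof (cases "e = 1 \<and> w = r_PN0 d")
        case True
        have "w ! (2*j)" "\<not> w ! (2*j+1)" using True j1 by (simp_all add: r_PN0_nth)
        thus ?thesis using sgw j1 lw' True by auto
      next
        case False
        hence F: "e = -1" "w = r_NP0 d" using ew by auto
        have "\<not> w ! (2*j)" "w ! (2*j+1)" using F j1 by (simp_all add: r_NP0_nth)
        thus ?thesis using sgw j1 lw' F by auto
      qed
    qed
    have dQ: "degree Q = 2*n" using assms(4) dn by simp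
    show ?thesis unfolding hdiv
      using moae_core[OF e len Qf L dQ srt sgz] unfolding dn[symmetric] .
  qed
  have Iodd: "coeff Q 1 = 0" if I: "\<exists>A as. A > 0 \<and> length as = d div 2 \<and> (\<forall>a\<in>set as. a \<noteq> 0) \<and>
              Q = smult A (\<Prod>a\<leftarrow>as. [:-(a^2), 0, 1:])"
  proof -
    obtain A as where Q: "Q = smult A (\<Prod>a\<leftarrow>as. [:-(a^2), 0, 1:])" using I by blast
    have "coeff (\<Prod>a\<leftarrow>as. [:-(a^2),0,1:]) 1 = (0::real)"
      using odd_zero_prod[of 1 "\<lambda>a. -(a^2)" "\<lambda>_. 1" as] by simp
    thus ?thesis using Q by simp
  qed
  have P2: "\<forall>k\<le>d. sgn (coeff Q (d - k)) = (if odd k then 0 else if k mod 4 = 0 then 1 else -1)"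
    if I: "\<exists>A as. A > 0 \<and> length as = d div 2 \<and> (\<forall>a\<in>set as. a \<noteq> 0) \<and>
              Q = smult A (\<Prod>a\<leftarrow>as. [:-(a^2), 0, 1:])"
  proof -
    obtain A as where "A > 0" "length as = d div 2" "\<forall>a\<in>set as. a \<noteq> 0"
      "Q = smult A (\<Prod>a\<leftarrow>as. [:-(a^2), 0, 1:])" using I by blast
    thus ?thesis using part2 assms(4) assms(2) by blast
  qed
  have IorNZ: "(\<exists>A as. A > 0 \<and> length as = d div 2 \<and> (\<forall>a\<in>set as. a \<noteq> 0) \<and>
              Q = smult A (\<Prod>a\<leftarrow>as. [:-(a^2), 0, 1:])) \<or> (\<forall>k\<le>d. coeff Q k \<noteq> 0)"
    using assms(7) core[of 1 "r_PN0 d"] core[of "-1" "r_NP0 d"] by blast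
  show ?thesis
  proof (cases "\<exists>A as. A > 0 \<and> length as = d div 2 \<and> (\<forall>a\<in>set as. a \<noteq> 0) \<and>
              Q = smult A (\<Prod>a\<leftarrow>as. [:-(a^2), 0, 1:])")
    case True
    have "\<not> (\<forall>k\<le>d. coeff Q k \<noteq> 0)" using Iodd[OF True] d1 by blast
    thus ?thesis using True P2[OF True] by blast
  next
    case False
    have nz: "\<forall>k\<le>d. coeff Q k \<noteq> 0" using IorNZ False by blast
    have np: "\<forall>zs. root_list Q zs \<longrightarrow> \<not> pairable (mset zs)"
      using pair_odd nz d1 by blast
    have PN: "defines_sign_pattern Q (Sigma_plus d)" if "defines_moae Q (r_PN0 d)"
    proof -
      have s: "\<forall>k\<le>d. sgn (coeff Q (d - k)) = sg k * 1^k" using core[of 1 "r_PN0 d"] that nz by blast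
      show ?thesis
        by (rule sign_pattern[OF assms(4) nz]) (use s Sigma_plus_nth in \<open>simp_all add: Sigma_plus_def\<close>)
    qed
    have NP: "defines_sign_pattern Q (Sigma_minus d)" if "defines_moae Q (r_NP0 d)"
    proof -
      have s: "\<forall>k\<le>d. sgn (coeff Q (d - k)) = sg k * (-1)^k" using core[of "-1" "r_NP0 d"] that nz by blast
      show ?thesis
        by (rule sign_pattern[OF assms(4) nz]) (use s Sigma_minus_nth in \<open>simp_all add: Sigma_minus_def\<close>)
    qed
    show ?thesis using False nz np PN NP by blast
  qed
qed

end
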